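(* Let $m_1,m_2$ be positive integers. If $\Delta(\mathcal{T},m_1)$ and $\Delta(\mathcal{T},m_2)$ are isomorphic as unlabelled directed graphs, then $m_1=m_2$.
   Context: A quasi-array of size $m$ is an array $Q$ with cells $(i,j)$, $1\le i\le m$, $1\le j\le m-i+1$, each containing a positive integer $Q_{(i,j)}$, with $Q_{(1,j)}\le Q_{(1,j+1)}$ and $Q_{(i,j)}=Q_{(1,i+j-1)}+i-1$. The $k$-th diagonal is the set of cells $(i,j)$ with $i+j-1=k$. For $Q$ of size $m$: $D_m$ is always defined and adds $1$ to every entry of the $m$-th diagonal; for $1\le k\le m-1$, $D_k$ is defined iff $Q_{(1,k)}<Q_{(1,k+1)}$, and then adds $1$ to every entry of the $k$-th diagonal; $D_k$ is undefined for $k>m$. $\Delta(\mathcal{T},m)$ is the directed graph whose vertices are the quasi-arrays of size $m$, with an edge $Q\to D_k(Q)$ labelled $k$ whenever $D_k$ is defined on $Q$. *)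

theory Defs
  imports Main
begin

text \<open>A quasi-array of size m is represented as a function Q :: nat => nat => nat,
  where Q i j is the entry in cell (i,j); outside the cells the value is fixed to 0
  so that each quasi-array has a unique representation.\<close>

definition qa_cells :: "nat \<Rightarrow> (nat \<times> nat) set" where
  "qa_cells m = {(i, j). 1 \<le> i \<and> i \<le> m \<and> 1 \<le> j \<and> j \<le> m - i + 1}"

definition quasi_array :: "nat \<Rightarrow> (nat \<Rightarrow> nat \<Rightarrow> nat) \<Rightarrow> bool" where
  "quasi_array m Q \<longleftrightarrow>
     (\<forall>(i, j) \<in> qa_cells m. 0 < Q i j) \<and>
     (\<forall>i j. (i, j) \<notin> qa_cells m \<longrightarrow> Q i j = 0) \<and>
     (\<forall>j. 1 \<le> j \<and> j < m \<longrightarrow> Q 1 j \<le> Q 1 (j + 1)) \<and>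
     (\<forall>(i, j) \<in> qa_cells m. Q i j = Q 1 (i + j - 1) + (i - 1))"

definition qa_D :: "nat \<Rightarrow> nat \<Rightarrow> (nat \<Rightarrow> nat \<Rightarrow> nat) \<Rightarrow> (nat \<Rightarrow> nat \<Rightarrow> nat)" where
  "qa_D m k Q = (\<lambda>i j. if (i, j) \<in> qa_cells m \<and> i + j - 1 = k then Q i j + 1 else Q i j)"

definition qa_D_defined :: "nat \<Rightarrow> nat \<Rightarrow> (nat \<Rightarrow> nat \<Rightarrow> nat) \<Rightarrow> bool" where
  "qa_D_defined m k Q \<longleftrightarrow> 1 \<le> k \<and> (k = m \<or> (k < m \<and> Q 1 k < Q 1 (k + 1)))"

definition Delta_V :: "nat \<Rightarrow> (nat \<Rightarrow> nat \<Rightarrow> nat) set" where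
  "Delta_V m = {Q. quasi_array m Q}"

definition Delta_E :: "nat \<Rightarrow> (nat \<Rightarrow> nat \<Rightarrow> nat) \<Rightarrow> (nat \<Rightarrow> nat \<Rightarrow> nat) \<Rightarrow> bool" where
  "Delta_E m Q Q' \<longleftrightarrow> Q \<in> Delta_V m \<and> (\<exists>k. qa_D_defined m k Q \<and> Q' = qa_D m k Q)"

definition Delta_iso :: "nat \<Rightarrow> nat \<Rightarrow> bool" where
  "Delta_iso m1 m2 \<longleftrightarrow> (\<exists>f. bij_betw f (Delta_V m1) (Delta_V m2) \<and>
     (\<forall>P \<in> Delta_V m1. \<forall>Q \<in> Delta_V m1. Delta_E m1 P Q \<longleftrightarrow> Delta_E m2 (f P) (f Q)))"

end

theory Submission
  imports Defs
begin

definition NB :: "nat \<Rightarrow> (nat \<Rightarrow> nat \<Rightarrow> nat) \<Rightarrow> (nat \<Rightarrow> nat \<Rightarrow> nat) set" where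
  "NB m P = {Q \<in> Delta_V m. Delta_E m P Q}"

lemma NB_sub: "NB m P \<subseteq> (\<lambda>k. qa_D m k P) ` {1..m}"
  unfolding NB_def Delta_E_def qa_D_defined_def by auto

lemma NB_fin: "finite (NB m P)"
  by (rule finite_subset[OF NB_sub]) simp

lemma NB_card: "card (NB m P) \<le> m"
proof -
  have "card (NB m P) \<le> card ((\<lambda>k. qa_D m k P) ` {1..m})"
    by (rule card_mono[OF _ NB_sub]) simp
  also have "\<dots> \<le> m" using card_image_le[of "{1..m}" "\<lambda>k. qa_D m k P"] by simp
  finally show ?thesis .
qed

definition Q0 :: "nat \<Rightarrow> nat \<Rightarrow> nat \<Rightarrow> nat" where
  "Q0 m = (\<lambda>i j. if (i, j) \<in> qa_cells m then 2*i+j-2 else 0)"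

lemma Q0_V: "Q0 m \<in> Delta_V m"
  unfolding Delta_V_def quasi_array_def Q0_def qa_cells_def by auto

lemma Q0D_V: assumes "1 \<le> k" "k \<le> m" shows "qa_D m k (Q0 m) \<in> Delta_V m"
  using assms unfolding Delta_V_def quasi_array_def Q0_def qa_cells_def qa_D_def by auto

lemma Q0_card: assumes "0 < m" shows "card (NB m (Q0 m)) = m"
proof -
  have sub: "(\<lambda>k. qa_D m k (Q0 m)) ` {1..m} \<subseteq> NB m (Q0 m)"
  proof
    fix Q assume "Q \<in> (\<lambda>k. qa_D m k (Q0 m)) ` {1..m}"
    then obtain k where k: "k \<in> {1..m}" "Q = qa_D m k (Q0 m)" by auto
    have "qa_D_defined m k (Q0 m)"
      using k unfolding qa_D_defined_def Q0_def qa_cells_def by auto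
    then show "Q \<in> NB m (Q0 m)" using k Q0D_V[of k m] Q0_V[of m]
      unfolding NB_def Delta_E_def by auto
  qed
  have inj: "inj_on (\<lambda>k. qa_D m k (Q0 m)) {1..m}"
  proof (rule inj_onI)
    fix k k' assume kk: "k \<in> {1..m}" "k' \<in> {1..m}" "qa_D m k (Q0 m) = qa_D m k' (Q0 m)"
    then have "qa_D m k (Q0 m) 1 k = qa_D m k' (Q0 m) 1 k" by simp
    then show "k = k'" using kk(1,2) unfolding qa_D_def Q0_def qa_cells_def
      by (auto split: if_splits)
  qed
  have "m = card ((\<lambda>k. qa_D m k (Q0 m)) ` {1..m})" using card_image[OF inj] by simp
  also have "\<dots> \<le> card (NB m (Q0 m))" by (rule card_mono[OF NB_fin sub])
  finally show ?thesis using NB_card[of m "Q0 m"] by simp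
qed

lemma iso_NB:
  assumes "bij_betw f (Delta_V m1) (Delta_V m2)"
    and "\<forall>P \<in> Delta_V m1. \<forall>Q \<in> Delta_V m1. Delta_E m1 P Q \<longleftrightarrow> Delta_E m2 (f P) (f Q)"
    and "P \<in> Delta_V m1"
  shows "card (NB m1 P) = card (NB m2 (f P))"
proof -
  have inj: "inj_on f (NB m1 P)" using assms(1) unfolding bij_betw_def NB_def
    by (auto intro: inj_on_subset)
  have "f ` NB m1 P = NB m2 (f P)"
  proof
    show "f ` NB m1 P \<subseteq> NB m2 (f P)" using assms unfolding NB_def bij_betw_def by auto
  next
    show "NB m2 (f P) \<subseteq> f ` NB m1 P"
    proof
      fix Q assume Q: "Q \<in> NB m2 (f P)"
      then have "Q \<in> f ` Delta_V m1" using assms(1) unfolding NB_def bij_betw_def by auto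
      then obtain R where R: "R \<in> Delta_V m1" "Q = f R" by auto
      then show "Q \<in> f ` NB m1 P" using Q assms(2,3) unfolding NB_def by auto
    qed
  qed
  then show ?thesis using card_image[OF inj] by simp
qed

theorem proposition4p3:
  fixes m1 m2 :: nat
  assumes "0 < m1" and "0 < m2"
    and "Delta_iso m1 m2"
  shows "m1 = m2"
proof -
  obtain f where f: "bij_betw f (Delta_V m1) (Delta_V m2)"
    "\<forall>P \<in> Delta_V m1. \<forall>Q \<in> Delta_V m1. Delta_E m1 P Q \<longleftrightarrow> Delta_E m2 (f P) (f Q)"
    using assms(3) unfolding Delta_iso_def by blast
  have "m1 = card (NB m2 (f (Q0 m1)))"
    using iso_NB[OF f Q0_V] Q0_card[OF assms(1)] by simp
  then have 1: "m1 \<le> m2" using NB_card by metis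
  obtain P where P: "P \<in> Delta_V m1" "f P = Q0 m2"
    using f(1) Q0_V[of m2] unfolding bij_betw_def by (metis imageE)
  have "m2 = card (NB m1 P)"
    using iso_NB[OF f P(1)] P(2) Q0_card[OF assms(2)] by simp
  then have "m2 \<le> m1" using NB_card by metis
  with 1 show ?thesis by simp
qed

end
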